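(* For any formula $A$, the sequent $\Box(\Box(A\to\Box A)\to A)\Rightarrow A$ is provable in $\mathsf{Grz}_\infty$.
   Context: Formulas are built from $\bot$ and atomic propositions using $\to$ and $\Box$. A sequent is $\Gamma\Rightarrow\Delta$ with $\Gamma,\Delta$ finite multisets of formulas; $\Box\Pi$ denotes the multiset $\{\Box B:B\in\Pi\}$. The calculus $\mathsf{Grz}_\infty$ has initial sequents $\Gamma,p\Rightarrow p,\Delta$ ($p$ atomic) and $\Gamma,\bot\Rightarrow\Delta$, and rules: $(\to_L)$ from $\Gamma,B\Rightarrow\Delta$ and $\Gamma\Rightarrow A,\Delta$ infer $\Gamma,A\to B\Rightarrow\Delta$; $(\to_R)$ from $\Gamma,A\Rightarrow B,\Delta$ infer $\Gamma\Rightarrow A\to B,\Delta$; $(\mathsf{refl})$ from $\Gamma,B,\Box B\Rightarrow\Delta$ infer $\Gamma,\Box B\Rightarrow\Delta$; $(\Box)$ from left premise $\Gamma,\Box\Pi\Rightarrow A,\Delta$ and right premise $\Box\Pi\Rightarrow A$ infer $\Gamma,\Box\Pi\Rightarrow\Box A,\Delta$. An $\infty$-proof is a possibly infinite tree of sequents built by these rules, with leaves labelled by initial sequents, in which every infinite branch passes through a right premise of $(\Box)$ infinitely often; a sequent is provable if it labels the root of an $\infty$-proof. *)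

theory Defs
  imports Main "HOL-Library.Multiset"
begin

datatype fm = Bot | At nat | Imp fm fm | Box fm

type_synonym sequent = "fm multiset \<times> fm multiset"

(* rule labels of Grz_infinity; Ax covers both kinds of initial sequents *)
datatype rule = Ax | ImpL | ImpR | Refl | BoxR

fun nprem :: "rule \<Rightarrow> nat" where
  "nprem Ax = 0" | "nprem ImpL = 2" | "nprem ImpR = 1" | "nprem Refl = 1" | "nprem BoxR = 2"

definition initial :: "sequent \<Rightarrow> bool" where
  "initial s \<longleftrightarrow> (\<exists>p. At p \<in># fst s \<and> At p \<in># snd s) \<or> Bot \<in># fst s"

fun rule_inst :: "rule \<Rightarrow> sequent \<Rightarrow> sequent list \<Rightarrow> bool" where
  "rule_inst Ax s ps \<longleftrightarrow> ps = [] \<and> initial s"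
| "rule_inst ImpL (G, D) ps \<longleftrightarrow> (\<exists>\<Gamma> A B. G = add_mset (Imp A B) \<Gamma> \<and>
      ps = [(add_mset B \<Gamma>, D), (\<Gamma>, add_mset A D)])"
| "rule_inst ImpR (G, D) ps \<longleftrightarrow> (\<exists>\<Delta> A B. D = add_mset (Imp A B) \<Delta> \<and>
      ps = [(add_mset A G, add_mset B \<Delta>)])"
| "rule_inst Refl (G, D) ps \<longleftrightarrow> (\<exists>\<Gamma> B. G = add_mset (Box B) \<Gamma> \<and>
      ps = [(add_mset B (add_mset (Box B) \<Gamma>), D)])"
| "rule_inst BoxR (G, D) ps \<longleftrightarrow> (\<exists>\<Gamma> \<Pi> A \<Delta>. G = \<Gamma> + image_mset Box \<Pi> \<and> D = add_mset (Box A) \<Delta> \<and>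
      ps = [(\<Gamma> + image_mset Box \<Pi>, add_mset A \<Delta>), (image_mset Box \<Pi>, {#A#})])"

(* A possibly infinite proof tree: nodes are addresses (nat lists), T the set of nodes,
   lab the sequent at a node, rl the rule applied at a node; child i of xs is xs @ [i].
   The right premise of BoxR is child number 1. *)
definition inf_proof :: "nat list set \<Rightarrow> (nat list \<Rightarrow> sequent) \<Rightarrow> (nat list \<Rightarrow> rule) \<Rightarrow> bool" where
  "inf_proof T lab rl \<longleftrightarrow>
     [] \<in> T \<and>
     (\<forall>xs i. xs @ [i] \<in> T \<longrightarrow> xs \<in> T) \<and>
     (\<forall>xs\<in>T. (\<forall>i. xs @ [i] \<in> T \<longleftrightarrow> i < nprem (rl xs)) \<and>
        rule_inst (rl xs) (lab xs) (map (\<lambda>i. lab (xs @ [i])) [0..<nprem (rl xs)])) \<and>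
     (\<forall>f :: nat \<Rightarrow> nat. (\<forall>n. map f [0..<n] \<in> T) \<longrightarrow>
        (\<forall>m. \<exists>n\<ge>m. rl (map f [0..<n]) = BoxR \<and> f n = 1))"

definition provable :: "sequent \<Rightarrow> bool" where
  "provable s \<longleftrightarrow> (\<exists>T lab rl. inf_proof T lab rl \<and> lab [] = s)"

end

theory Submission
  imports Defs
begin

lemma graph_provable:
  fixes lab :: "'a \<Rightarrow> sequent" and st :: "'a \<Rightarrow> rule \<times> 'a list" and m :: "'a \<Rightarrow> nat"
  assumes ri: "\<And>a. rule_inst (fst (st a)) (lab a) (map lab (snd (st a)))"
    and len: "\<And>a. length (snd (st a)) = nprem (fst (st a))"
    and dec: "\<And>a i. i < length (snd (st a)) \<Longrightarrow> \<not> (fst (st a) = BoxR \<and> i = 1) \<Longrightarrow> m (snd (st a) ! i) < m a"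
  shows "provable (lab a0)"
proof -
  define nd where "nd xs = foldl (\<lambda>a i. snd (st a) ! i) a0 xs" for xs
  have nd_snoc: "nd (xs @ [i]) = snd (st (nd xs)) ! i" for xs i
    by (simp add: nd_def)
  define T where "T = {xs. \<forall>k<length xs. xs ! k < nprem (fst (st (nd (take k xs))))}"
  define lab' where "lab' xs = lab (nd xs)" for xs
  define rl where "rl xs = fst (st (nd xs))" for xs
  have T_snoc: "xs @ [i] \<in> T \<longleftrightarrow> xs \<in> T \<and> i < nprem (rl xs)" for xs i
  proof -
    have "(\<forall>k<length (xs @ [i]). (xs @ [i]) ! k < nprem (fst (st (nd (take k (xs @ [i]))))))
       \<longleftrightarrow> (\<forall>k<length xs. xs ! k < nprem (fst (st (nd (take k xs))))) \<and> i < nprem (rl xs)"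
      by (auto simp: nth_append rl_def less_Suc_eq)
    then show ?thesis by (simp add: T_def)
  qed
  have "inf_proof T lab' rl"
    unfolding inf_proof_def
  proof (intro conjI allI impI ballI)
    show "[] \<in> T" by (simp add: T_def)
  next
    fix xs i assume "xs @ [i] \<in> T" then show "xs \<in> T" using T_snoc by blast
  next
    fix xs i assume "xs \<in> T"
    then show "(xs @ [i] \<in> T) = (i < nprem (rl xs))" using T_snoc by blast
  next
    fix xs assume "xs \<in> T"
    have "map (\<lambda>i. lab' (xs @ [i])) [0..<nprem (rl xs)] = map lab (snd (st (nd xs)))"
      unfolding lab'_def nd_snoc rl_def len[symmetric]
      by (rule nth_equalityI) simp_all
    then show "rule_inst (rl xs) (lab' xs) (map (\<lambda>i. lab' (xs @ [i])) [0..<nprem (rl xs)])"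
      using ri by (simp add: lab'_def rl_def)
  next
    fix f :: "nat \<Rightarrow> nat" and m0
    assume all: "\<forall>n. map f [0..<n] \<in> T"
    show "\<exists>n\<ge>m0. rl (map f [0..<n]) = BoxR \<and> f n = 1"
    proof (rule ccontr)
      assume nx: "\<not> ?thesis"
      define g where "g n = m (nd (map f [0..<n]))" for n
      have step: "g (Suc n) < g n" if "n \<ge> m0" for n
      proof -
        have "map f [0..<n] @ [f n] \<in> T" using all[rule_format, of "Suc n"] by simp
        then have fl: "f n < length (snd (st (nd (map f [0..<n]))))"
          using T_snoc len rl_def by simp
        have "\<not> (fst (st (nd (map f [0..<n]))) = BoxR \<and> f n = 1)"
          using nx that rl_def by auto
        from dec[OF fl this] show ?thesis
          by (simp add: g_def nd_snoc)
      qed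
      have "g (m0 + k) + k \<le> g m0" for k
      proof (induction k)
        case 0 then show ?case by simp
      next
        case (Suc k)
        have "g (m0 + Suc k) < g (m0 + k)" using step[of "m0 + k"] by simp
        with Suc show ?case by simp
      qed
      from this[of "Suc (g m0)"] show False by simp
    qed
  qed
  moreover have "lab' [] = lab a0" by (simp add: lab'_def nd_def)
  ultimately show ?thesis unfolding provable_def by blast
qed

datatype node = Id "fm multiset" "fm multiset" fm | RL "fm multiset" "fm multiset" fm
  | IL "fm multiset" "fm multiset" fm fm | R0 | R1 | R2 | R3 | R4 | R5

fun nlab :: "fm \<Rightarrow> node \<Rightarrow> sequent" where
  "nlab A (Id G D B) = (add_mset B G, add_mset B D)"
| "nlab A (RL G D C) = (add_mset (Box C) G, add_mset C D)"
| "nlab A (IL G D C E) = (add_mset C (add_mset (Imp C E) G), add_mset E D)"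
| "nlab A R0 = ({# Box (Imp (Box (Imp A (Box A))) A) #}, {# A #})"
| "nlab A R1 = ({# Imp (Box (Imp A (Box A))) A, Box (Imp (Box (Imp A (Box A))) A) #}, {# A #})"
| "nlab A R2 = ({# Box (Imp (Box (Imp A (Box A))) A) #}, {# Box (Imp A (Box A)), A #})"
| "nlab A R3 = ({# Box (Imp (Box (Imp A (Box A))) A) #}, {# Imp A (Box A), A #})"
| "nlab A R4 = ({# Box (Imp (Box (Imp A (Box A))) A) #}, {# Imp A (Box A) #})"
| "nlab A R5 = ({# A, Box (Imp (Box (Imp A (Box A))) A) #}, {# Box A #})"

fun nst :: "fm \<Rightarrow> node \<Rightarrow> rule \<times> node list" where
  "nst A (Id G D Bot) = (Ax, [])"
| "nst A (Id G D (At p)) = (Ax, [])"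
| "nst A (Id G D (Imp C E)) = (ImpR, [IL G D C E])"
| "nst A (Id G D (Box C)) = (BoxR, [RL G D C, RL {#} {#} C])"
| "nst A (RL G D C) = (Refl, [Id (add_mset (Box C) G) D C])"
| "nst A (IL G D C E) = (ImpL, [Id (add_mset C G) D E, Id G (add_mset E D) C])"
| "nst A R0 = (Refl, [R1])"
| "nst A R1 = (ImpL, [Id {# Box (Imp (Box (Imp A (Box A))) A) #} {#} A, R2])"
| "nst A R2 = (BoxR, [R3, R4])"
| "nst A R3 = (ImpR, [Id {# Box (Imp (Box (Imp A (Box A))) A) #} {# Box A #} A])"
| "nst A R4 = (ImpR, [R5])"
| "nst A R5 = (BoxR, [Id {# Box (Imp (Box (Imp A (Box A))) A) #} {#} A, R0])"

fun nm :: "fm \<Rightarrow> node \<Rightarrow> nat" where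
  "nm A (Id G D B) = 3 * size B"
| "nm A (RL G D C) = 3 * size C + 1"
| "nm A (IL G D C E) = 3 * (size C + size E) + 1"
| "nm A R0 = 3 * size A + 10"
| "nm A R1 = 3 * size A + 9"
| "nm A R2 = 3 * size A + 8"
| "nm A R3 = 3 * size A + 7"
| "nm A R4 = 3 * size A + 7"
| "nm A R5 = 3 * size A + 6"

lemma nst_len: "length (snd (nst A a)) = nprem (fst (nst A a))"
  by (cases "(A,a)" rule: nst.cases) auto

lemma nst_dec: "i < length (snd (nst A a)) \<Longrightarrow> \<not> (fst (nst A a) = BoxR \<and> i = 1) \<Longrightarrow>
   nm A (snd (nst A a) ! i) < nm A a"
  by (cases "(A,a)" rule: nst.cases) (auto simp: less_Suc_eq nth_Cons')

lemma r5_inst: "rule_inst BoxR ({#A, Box (Imp (Box (Imp A (Box A))) A)#}, {#Box A#})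
   [(add_mset A {#Box (Imp (Box (Imp A (Box A))) A)#}, {#A#}), ({#Box (Imp (Box (Imp A (Box A))) A)#}, {#A#})]"
  apply simp
  apply (rule exI[of _ "{#A#}"], rule exI[of _ "{#Imp (Box (Imp A (Box A))) A#}"])
  apply simp
  done

lemma r0: "rule_inst Refl ({# Box (Imp (Box (Imp A (Box A))) A) #}, {# A #})
  [({# Imp (Box (Imp A (Box A))) A, Box (Imp (Box (Imp A (Box A))) A) #}, {# A #})]"
  by simp
lemma r1: "rule_inst ImpL ({# Imp (Box (Imp A (Box A))) A, Box (Imp (Box (Imp A (Box A))) A) #}, {# A #})
  [(add_mset A {# Box (Imp (Box (Imp A (Box A))) A) #}, add_mset A {#}),
   ({# Box (Imp (Box (Imp A (Box A))) A) #}, {# Box (Imp A (Box A)), A #})]"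
  by simp
lemma r2: "rule_inst BoxR ({# Box (Imp (Box (Imp A (Box A))) A) #}, {# Box (Imp A (Box A)), A #})
  [({# Box (Imp (Box (Imp A (Box A))) A) #}, {# Imp A (Box A), A #}),
   ({# Box (Imp (Box (Imp A (Box A))) A) #}, {# Imp A (Box A) #})]"
  apply simp
  apply (rule exI[of _ "{#}"], rule exI[of _ "{#Imp (Box (Imp A (Box A))) A#}"])
  apply simp
  done
lemma r3: "rule_inst ImpR ({# Box (Imp (Box (Imp A (Box A))) A) #}, {# Imp A (Box A), A #})
  [(add_mset A {# Box (Imp (Box (Imp A (Box A))) A) #}, add_mset A {# Box A #})]"
  apply simp
  apply (rule exI[of _ "{#A#}"], rule exI[of _ "Box A"])
  apply simp
  done
lemma r4: "rule_inst ImpR ({# Box (Imp (Box (Imp A (Box A))) A) #}, {# Imp A (Box A) #})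
  [({# A, Box (Imp (Box (Imp A (Box A))) A) #}, {# Box A #})]"
  by simp
lemma idbox: "rule_inst BoxR (add_mset (Box C) G, add_mset (Box C) D)
   [(add_mset (Box C) G, add_mset C D), (add_mset (Box C) {#}, add_mset C {#})]"
  apply simp
  apply (rule exI[of _ G], rule exI[of _ "{#C#}"])
  apply simp
  done
lemma idimp: "rule_inst ImpR (add_mset (Imp C E) G, add_mset (Imp C E) D)
   [(add_mset C (add_mset (Imp C E) G), add_mset E D)]"
  unfolding rule_inst.simps by blast
lemma rl: "rule_inst Refl (add_mset (Box C) G, add_mset C D)
   [(add_mset C (add_mset (Box C) G), add_mset C D)]"
  unfolding rule_inst.simps by blast
lemma il: "rule_inst ImpL (add_mset C (add_mset (Imp C E) G), add_mset E D)
   [(add_mset E (add_mset C G), add_mset E D), (add_mset C G, add_mset C (add_mset E D))]"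
  by simp
lemma ax_bot: "rule_inst Ax (add_mset Bot G, add_mset Bot D) []"
  by (simp add: initial_def)
lemma ax_at: "rule_inst Ax (add_mset (At p) G, add_mset (At p) D) []"
  by (auto simp add: initial_def)

lemmas node_simps = nst.simps nlab.simps fst_conv snd_conv list.map

lemma nst_ri: "rule_inst (fst (nst A a)) (nlab A a) (map (nlab A) (snd (nst A a)))"
proof (cases a)
  case (Id G D B)
  then show ?thesis
    by (cases B) (simp only: node_simps, rule ax_bot ax_at idimp idbox)+
next
  case (RL G D C) then show ?thesis by (simp only: node_simps) (rule rl)
next
  case (IL G D C E) then show ?thesis by (simp only: node_simps) (rule il)
next
  case R0 then show ?thesis by (simp only: node_simps) (rule r0)
next
  case R1 then show ?thesis by (simp only: node_simps) (rule r1)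
next
  case R2 then show ?thesis by (simp only: node_simps) (rule r2)
next
  case R3 then show ?thesis by (simp only: node_simps) (rule r3)
next
  case R4 then show ?thesis by (simp only: node_simps) (rule r4)
next
  case R5 then show ?thesis by (simp only: node_simps) (rule r5_inst)
qed

theorem lemma3p2:
  fixes A :: fm
  shows "provable ({# Box (Imp (Box (Imp A (Box A))) A) #}, {# A #})"
proof -
  have "provable (nlab A R0)"
    by (rule graph_provable[of "nst A" "nlab A" "nm A" R0, OF nst_ri nst_len nst_dec])
  then show ?thesis by simp
qed

end
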